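(* Let $G$ be a connected graph of order $n\ge2$ with maximum degree $\Delta(G)$. Then $\operatorname{ZIR}(G)\le\frac{\Delta(G)}{\Delta(G)+1}\,n$, and this bound is sharp.
   Context: A nonempty $F\subseteq V(G)$ is a fort if every $v\notin F$ has $|N(v)\cap F|\ne1$. A private fort of $x\in S$ relative to $S$ is a fort $F$ with $S\cap F=\{x\}$; $S$ is a ZIr-set if every element of $S$ has a private fort. $\operatorname{ZIR}(G)$ is the maximum cardinality of an inclusion-maximal ZIr-set. *)

theory Defs
  imports Complex_Main
begin

definition simple_graph :: "'a set \<Rightarrow> ('a \<Rightarrow> 'a \<Rightarrow> bool) \<Rightarrow> bool" where
  "simple_graph V E \<longleftrightarrow> finite V \<and> (\<forall>x y. E x y \<longrightarrow> x \<in> V \<and> y \<in> V)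
     \<and> (\<forall>x y. E x y \<longrightarrow> E y x) \<and> (\<forall>x. \<not> E x x)"

definition connected_graph :: "'a set \<Rightarrow> ('a \<Rightarrow> 'a \<Rightarrow> bool) \<Rightarrow> bool" where
  "connected_graph V E \<longleftrightarrow> (\<forall>x\<in>V. \<forall>y\<in>V. E\<^sup>*\<^sup>* x y)"

definition nbhd :: "'a set \<Rightarrow> ('a \<Rightarrow> 'a \<Rightarrow> bool) \<Rightarrow> 'a \<Rightarrow> 'a set" where
  "nbhd V E v = {u \<in> V. E v u}"

definition degree :: "'a set \<Rightarrow> ('a \<Rightarrow> 'a \<Rightarrow> bool) \<Rightarrow> 'a \<Rightarrow> nat" where
  "degree V E v = card (nbhd V E v)"

definition max_degree :: "'a set \<Rightarrow> ('a \<Rightarrow> 'a \<Rightarrow> bool) \<Rightarrow> nat" where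
  "max_degree V E = Max (degree V E ` V)"

definition fort :: "'a set \<Rightarrow> ('a \<Rightarrow> 'a \<Rightarrow> bool) \<Rightarrow> 'a set \<Rightarrow> bool" where
  "fort V E F \<longleftrightarrow> F \<noteq> {} \<and> F \<subseteq> V \<and> (\<forall>v \<in> V - F. card (nbhd V E v \<inter> F) \<noteq> 1)"

definition private_fort :: "'a set \<Rightarrow> ('a \<Rightarrow> 'a \<Rightarrow> bool) \<Rightarrow> 'a set \<Rightarrow> 'a \<Rightarrow> 'a set \<Rightarrow> bool" where
  "private_fort V E S x F \<longleftrightarrow> fort V E F \<and> S \<inter> F = {x}"

definition ZIr_set :: "'a set \<Rightarrow> ('a \<Rightarrow> 'a \<Rightarrow> bool) \<Rightarrow> 'a set \<Rightarrow> bool" where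
  "ZIr_set V E S \<longleftrightarrow> S \<subseteq> V \<and> (\<forall>x \<in> S. \<exists>F. private_fort V E S x F)"

definition maximal_ZIr_set :: "'a set \<Rightarrow> ('a \<Rightarrow> 'a \<Rightarrow> bool) \<Rightarrow> 'a set \<Rightarrow> bool" where
  "maximal_ZIr_set V E S \<longleftrightarrow> ZIr_set V E S \<and> (\<forall>T. ZIr_set V E T \<and> S \<subseteq> T \<longrightarrow> T = S)"

definition ZIR :: "'a set \<Rightarrow> ('a \<Rightarrow> 'a \<Rightarrow> bool) \<Rightarrow> nat" where
  "ZIR V E = Max (card ` {S. maximal_ZIr_set V E S})"

end

theory Submission
  imports Defs
begin

lemma has_nb:
  assumes sg: "simple_graph V E" and cg: "connected_graph V E" and c2: "card V \<ge> 2" and x: "x \<in> V"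
  shows "\<exists>y. E x y"
proof -
  have "\<exists>y\<in>V. y \<noteq> x"
  proof (rule ccontr)
    assume "\<not> ?thesis"
    then have "V \<subseteq> {x}" by blast
    then have "card V \<le> 1" using card_mono[of "{x}" V] by (simp add: subset_singleton_iff)
    with c2 show False by simp
  qed
  then obtain y where y: "y \<in> V" "y \<noteq> x" by blast
  have "E\<^sup>*\<^sup>* x y" using cg x y unfolding connected_graph_def by blast
  then show ?thesis using y(2) by (cases rule: converse_rtranclpE) auto
qed

lemma out_nb:
  assumes sg: "simple_graph V E" and Z: "ZIr_set V E S" and x: "x \<in> S" and xw: "E x w"
  shows "\<exists>v. E x v \<and> v \<notin> S"
proof (rule ccontr)
  assume "\<not> ?thesis"
  then have allS: "\<And>v. E x v \<Longrightarrow> v \<in> S" by blast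
  have wS: "w \<in> S" using allS xw .
  obtain F where F: "private_fort V E S w F" using Z wS unfolding ZIr_set_def by blast
  have fo: "fort V E F" and SF: "S \<inter> F = {w}" using F unfolding private_fort_def by auto
  have xw': "x \<noteq> w" using sg xw unfolding simple_graph_def by auto
  have xF: "x \<notin> F" using SF x xw' by blast
  have xV: "x \<in> V" and wV: "w \<in> V" using sg xw unfolding simple_graph_def by auto
  have "nbhd V E x \<inter> F = {w}"
  proof
    show "nbhd V E x \<inter> F \<subseteq> {w}" using allS SF unfolding nbhd_def by blast
    show "{w} \<subseteq> nbhd V E x \<inter> F" using wV xw SF unfolding nbhd_def by blast
  qed
  then have "card (nbhd V E x \<inter> F) = 1" by simp
  moreover have "card (nbhd V E x \<inter> F) \<noteq> 1" using fo xV xF unfolding fort_def by blast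
  ultimately show False by simp
qed

lemma deg_le:
  assumes sg: "simple_graph V E" and v: "v \<in> V"
  shows "card (nbhd V E v) \<le> max_degree V E"
  using sg v unfolding max_degree_def degree_def simple_graph_def by (intro Max_ge) auto

lemma ZIr_bound:
  assumes sg: "simple_graph V E" and cg: "connected_graph V E" and c2: "card V \<ge> 2"
    and Z: "ZIr_set V E S"
  shows "(max_degree V E + 1) * card S \<le> max_degree V E * card V"
proof -
  let ?D = "max_degree V E"
  have fin: "finite V" using sg unfolding simple_graph_def by auto
  have SV: "S \<subseteq> V" using Z unfolding ZIr_set_def by auto
  have cov: "S \<subseteq> (\<Union>v\<in>V - S. nbhd V E v)"
  proof
    fix x assume x: "x \<in> S"
    then have xV: "x \<in> V" using SV by auto
    obtain w where "E x w" using has_nb[OF sg cg c2 xV] by blast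
    then obtain v where v: "E x v" "v \<notin> S" using out_nb[OF sg Z x] by blast
    have "v \<in> V" "E v x" using sg v unfolding simple_graph_def by auto
    then show "x \<in> (\<Union>v\<in>V - S. nbhd V E v)" using v xV unfolding nbhd_def by blast
  qed
  have "card S \<le> card (\<Union>v\<in>V - S. nbhd V E v)"
    using cov fin by (intro card_mono) (auto simp: nbhd_def)
  also have "\<dots> \<le> (\<Sum>v\<in>V - S. card (nbhd V E v))" using fin by (intro card_UN_le) auto
  also have "\<dots> \<le> (\<Sum>v\<in>V - S. ?D)" using deg_le[OF sg] by (intro sum_mono) auto
  also have "\<dots> = ?D * (card V - card S)"
    using fin SV by (simp add: card_Diff_subset finite_subset)
  finally have h: "card S \<le> ?D * (card V - card S)" .
  have "card S \<le> card V" using fin SV by (simp add: card_mono)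
  then have "?D * (card V - card S) = ?D * card V - ?D * card S" by (simp add: diff_mult_distrib2)
  moreover have "?D * card S \<le> ?D * card V" using \<open>card S \<le> card V\<close> by simp
  ultimately have "?D*(card V - card S) + ?D*card S = ?D*card V" by simp
  then have "card S + ?D*card S \<le> ?D*card V" using h by linarith
  then show ?thesis by simp
qed

lemma ZIR_facts:
  assumes sg: "simple_graph V E"
  shows "ZIR V E \<in> card ` {S. maximal_ZIr_set V E S}"
    and "\<And>S. maximal_ZIr_set V E S \<Longrightarrow> card S \<le> ZIR V E"
proof -
  have fin: "finite V" using sg unfolding simple_graph_def by auto
  have Zcard: "\<And>T. ZIr_set V E T \<Longrightarrow> card T < Suc (card V)"
    using fin unfolding ZIr_set_def by (simp add: card_mono le_imp_less_Suc)
  have "ZIr_set V E {}" unfolding ZIr_set_def by auto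
  then obtain S where S: "ZIr_set V E S" "\<forall>T. ZIr_set V E T \<longrightarrow> card T \<le> card S"
    using ex_has_greatest_nat[of "ZIr_set V E" "{}" card "Suc (card V)"] Zcard by blast
  have "maximal_ZIr_set V E S" unfolding maximal_ZIr_set_def
  proof (intro conjI allI impI)
    show "ZIr_set V E S" by (rule S(1))
    fix T assume T: "ZIr_set V E T \<and> S \<subseteq> T"
    then have "finite T" using fin unfolding ZIr_set_def by (auto intro: finite_subset)
    then show "T = S" using card_seteq[of T S] T S(2) by auto
  qed
  then have ne: "card ` {S. maximal_ZIr_set V E S} \<noteq> {}" by blast
  have fi: "finite (card ` {S. maximal_ZIr_set V E S})"
    by (rule finite_subset[of _ "{..card V}"])
       (use fin in \<open>auto simp: maximal_ZIr_set_def ZIr_set_def card_mono\<close>)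
  show "ZIR V E \<in> card ` {S. maximal_ZIr_set V E S}"
    unfolding ZIR_def using fi ne by (rule Max_in)
  show "\<And>S. maximal_ZIr_set V E S \<Longrightarrow> card S \<le> ZIR V E"
    unfolding ZIR_def using fi by (intro Max_ge) auto
qed

lemma ZIR_bound:
  assumes sg: "simple_graph V E" and cg: "connected_graph V E" and c2: "card V \<ge> 2"
  shows "(max_degree V E + 1) * ZIR V E \<le> max_degree V E * card V"
proof -
  obtain S where "maximal_ZIr_set V E S" "ZIR V E = card S" using ZIR_facts(1)[OF sg] by auto
  then show ?thesis using ZIr_bound[OF sg cg c2] unfolding maximal_ZIr_set_def by auto
qed

lemma cancel_aux:
  assumes "(D + 1) * t \<le> D * ((D::nat) + 1)"
  shows "t \<le> D"
proof (rule ccontr)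
  assume "\<not> t \<le> D"
  then have "D + 1 \<le> t" by simp
  then have "(D+1)*(D+1) \<le> (D+1)*t" by (rule mult_le_mono2)
  with assms have "(D+1)*(D+1) \<le> D*(D+1)" by linarith
  then show False by simp
qed

lemma real_bound:
  assumes "(D + 1) * z \<le> D * (n::nat)"
  shows "real z \<le> real D / real (D + 1) * real n"
proof -
  have "real (D+1) * real z \<le> real D * real n" using assms by (metis of_nat_le_iff of_nat_mult)
  then show ?thesis by (simp add: field_simps)
qed

theorem proposition4p10:
  shows "(\<forall>(V :: 'a set) E. simple_graph V E \<and> connected_graph V E \<and> card V \<ge> 2 \<longrightarrow>
            real (ZIR V E) \<le> real (max_degree V E) / real (max_degree V E + 1) * real (card V))
       \<and> (\<forall>D::nat. D \<ge> 1 \<longrightarrow> (\<exists>(V :: nat set) E. simple_graph V E \<and> connected_graph V E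
            \<and> card V \<ge> 2 \<and> max_degree V E = D
            \<and> real (ZIR V E) = real D / real (D + 1) * real (card V)))"
proof (intro conjI allI impI)
  fix V :: "'a set" and E
  assume "simple_graph V E \<and> connected_graph V E \<and> card V \<ge> 2"
  then show "real (ZIR V E) \<le> real (max_degree V E) / real (max_degree V E + 1) * real (card V)"
    using ZIR_bound real_bound by blast
next
  fix D :: nat assume D: "D \<ge> 1"
  define V where "V = {0..D}"
  define E where "E = (\<lambda>x y::nat. x \<noteq> y \<and> x \<le> D \<and> y \<le> D)"
  have sg: "simple_graph V E" unfolding simple_graph_def V_def E_def by auto
  have cg: "connected_graph V E" unfolding connected_graph_def
  proof (intro ballI)
    fix x y assume "x \<in> V" "y \<in> V"
    then show "E\<^sup>*\<^sup>* x y" by (cases "x = y") (auto simp: E_def V_def)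
  qed
  have cV: "card V = D + 1" unfolding V_def by simp
  have c2: "card V \<ge> 2" using D cV by simp
  have nb: "\<And>v. v \<in> V \<Longrightarrow> nbhd V E v = V - {v}" unfolding nbhd_def E_def V_def by auto
  have dg: "\<And>v. v \<in> V \<Longrightarrow> degree V E v = D"
  proof -
    fix v assume v: "v \<in> V"
    have "finite V" by (simp add: V_def)
    then show "degree V E v = D" using cV v nb[OF v] by (simp add: degree_def card_Diff_singleton)
  qed
  have "degree V E ` V = {D}"
  proof
    show "degree V E ` V \<subseteq> {D}" using dg by auto
    show "{D} \<subseteq> degree V E ` V" using dg[of 0] by (force simp: V_def)
  qed
  then have md: "max_degree V E = D" unfolding max_degree_def by simp
  have bnd: "\<And>T. ZIr_set V E T \<Longrightarrow> card T \<le> D"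
  proof -
    fix T assume "ZIr_set V E T"
    then have "(D + 1) * card T \<le> D * (D + 1)" using ZIr_bound[OF sg cg c2] md cV by simp
    then show "card T \<le> D" by (rule cancel_aux)
  qed
  define S where "S = {1..D}"
  have ZS: "ZIr_set V E S" unfolding ZIr_set_def
  proof (intro conjI ballI)
    show "S \<subseteq> V" unfolding S_def V_def by auto
    fix x assume x: "x \<in> S"
    have "private_fort V E S x {x, 0}" unfolding private_fort_def fort_def
    proof (intro conjI ballI)
      show "{x, 0} \<subseteq> V" using x unfolding S_def V_def by auto
      fix v assume v: "v \<in> V - {x, 0}"
      have "nbhd V E v \<inter> {x, 0} = {x, 0}" using v x nb[of v] unfolding S_def V_def by auto
      then show "card (nbhd V E v \<inter> {x, 0}) \<noteq> 1" using x unfolding S_def by auto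
    qed (use x in \<open>auto simp: S_def\<close>)
    then show "\<exists>F. private_fort V E S x F" by blast
  qed
  have mS: "maximal_ZIr_set V E S" unfolding maximal_ZIr_set_def
  proof (intro conjI allI impI)
    show "ZIr_set V E S" by (rule ZS)
    fix T assume T: "ZIr_set V E T \<and> S \<subseteq> T"
    then have "finite T" using sg unfolding ZIr_set_def simple_graph_def by (auto intro: finite_subset)
    moreover have "card T \<le> card S" using bnd T by (simp add: S_def)
    ultimately show "T = S" using T by (metis card_subset_eq antisym card_mono)
  qed
  have "ZIR V E = D"
  proof (rule antisym)
    have "(D + 1) * ZIR V E \<le> D * (D + 1)" using ZIR_bound[OF sg cg c2] md cV by simp
    then show "ZIR V E \<le> D" by (rule cancel_aux)
    show "D \<le> ZIR V E" using ZIR_facts(2)[OF sg mS] by (simp add: S_def)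
  qed
  then have "real (ZIR V E) = real D / real (D + 1) * real (card V)" using cV by simp
  then show "\<exists>(V :: nat set) E. simple_graph V E \<and> connected_graph V E
            \<and> card V \<ge> 2 \<and> max_degree V E = D
            \<and> real (ZIR V E) = real D / real (D + 1) * real (card V)"
    using sg cg c2 md by blast
qed

end
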